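(* Let $u$ and $v$ be robots on the same ring $r$ of an $m$-partial SCS. Then $u$ prevents $v$ from starving if and only if $r$ has a tie whose length equals the length of a simple path (along $r$) between $u$ and $v$.
   Context: Let $T=\{C_1,\dots,C_n\}$ be pairwise disjoint unit circles in the plane (trajectories) and $\epsilon<0.5$ a communication range. The graph of potential links $G_\epsilon(T)$ has the circle centers as nodes and an edge $\{i,j\}$ whenever the centers of $C_i,C_j$ are at distance at most $2+\epsilon$; it is assumed connected. Points of a circle are identified with angles (modulo $2\pi$), and a robot traverses a circle in one time unit. A schedule is a pair $(f,g)$, $f:T\to[0,2\pi)$, $g:T\to\{-1,1\}$ ($1$ = counterclockwise); the robot on $C_i$ is at angle $f(C_i)+2\pi g(C_i)t$ at time $t$. A communication graph $G=(V,E)$ is a connected spanning subgraph of $G_\epsilon(T)$. The link position $\phi_{ij}$ is the point of $C_i$ closest to $C_j$. A schedule is $G$-synchronized if for every $\{i,j\}\in E$ the robot on $C_i$ is at $\phi_{ij}$ exactly when the robot on $C_j$ is at $\phi_{ji}$. An SCS with communication graph $G$ consists of $n$ robots, one per circle, moving under a $G$-synchronized schedule with $g(C_i)=-g(C_j)$ for all $\{i,j\}\in E$. Shifting protocol: when a robot on $C_i$ reaches $\phi_{ij}$ and there is no robot at $\phi_{ji}$, it moves to $C_j$ and thereafter follows the schedule of $C_j$. An $m$-partial SCS is obtained by removing $n-m$ robots, the remaining $m$ applying the shifting protocol. A surviving robot starves if every time it arrives at a link position the corresponding neighbor is absent. A ring is the closed path traversed by a starving robot (following the assigned direction on each circle and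 always shifting to the neighboring circle at link positions). The length of a path along a ring is the total length of circle arcs it traverses, with multiplicity, ignoring transitions between circles; a path in a ring follows its travel direction and may contain full tours; it is simple if it contains no full tour. The crossing point of neighboring circles $C_i,C_j$ is the midpoint of the segment joining $\phi_{ij}$ and $\phi_{ji}$; a ring crosses itself at a crossing point if it traverses it in both directions ($C_i\to C_j$ and $C_j\to C_i$). A tie of a ring is a closed sub-path of the ring starting and ending at a crossing point where the ring crosses itself, without passing through that point in between. A robot $u'$ in ring $r'$ prevents a robot $u$ in ring $r$ from starving if there is a crossing point $c$ between $r$ and $r'$ (possibly $r=r'$) and two paths of equal length, one from the position of $u$ to $c$ in $r$ and one from the position of $u'$ to $c$ in $r'$. *)

theory Defs
  imports "HOL-Analysis.Analysis"
begin

(* Circles C_i (i < n) are the unit circles  sphere (cen i) 1  in the complex plane.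
   Angles are represented by the points they denote (so "mod 2 pi" is automatic). *)

definition pos :: "(nat \<Rightarrow> complex) \<Rightarrow> (nat \<Rightarrow> real) \<Rightarrow> (nat \<Rightarrow> int) \<Rightarrow> nat \<Rightarrow> real \<Rightarrow> complex" where
  "pos cen f g i t = cen i + cis (f i + 2 * pi * of_int (g i) * t)"

(* link position phi_ij: the point of C_i closest to C_j *)
definition lp :: "(nat \<Rightarrow> complex) \<Rightarrow> nat \<Rightarrow> nat \<Rightarrow> complex" where
  "lp cen i j = cen i + (cen j - cen i) / of_real (cmod (cen j - cen i))"

definition cp :: "(nat \<Rightarrow> complex) \<Rightarrow> nat \<Rightarrow> nat \<Rightarrow> complex" where
  "cp cen i j = (lp cen i j + lp cen j i) / 2"

definition pot_edges :: "nat \<Rightarrow> (nat \<Rightarrow> complex) \<Rightarrow> real \<Rightarrow> (nat \<times> nat) set" where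
  "pot_edges n cen eps = {(i,j). i < n \<and> j < n \<and> i \<noteq> j \<and> dist (cen i) (cen j) \<le> 2 + eps}"

definition connected_on :: "nat set \<Rightarrow> (nat \<times> nat) set \<Rightarrow> bool" where
  "connected_on V R \<longleftrightarrow> (\<forall>i\<in>V. \<forall>j\<in>V. (i, j) \<in> (R \<inter> (V \<times> V))\<^sup>*)"

definition synchronized :: "(nat \<times> nat) set \<Rightarrow> (nat \<Rightarrow> complex) \<Rightarrow> (nat \<Rightarrow> real) \<Rightarrow> (nat \<Rightarrow> int) \<Rightarrow> bool" where
  "synchronized E cen f g \<longleftrightarrow>
     (\<forall>(i,j)\<in>E. \<forall>t::real. pos cen f g i t = lp cen i j \<longleftrightarrow> pos cen f g j t = lp cen j i)"

definition SCS :: "nat \<Rightarrow> (nat \<Rightarrow> complex) \<Rightarrow> real \<Rightarrow> (nat \<times> nat) set \<Rightarrow> (nat \<Rightarrow> real) \<Rightarrow> (nat \<Rightarrow> int) \<Rightarrow> bool" where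
  "SCS n cen eps E f g \<longleftrightarrow>
     0 < eps \<and> eps < 1/2 \<and>
     (\<forall>i<n. \<forall>j<n. i \<noteq> j \<longrightarrow> sphere (cen i) 1 \<inter> sphere (cen j) 1 = {}) \<and>
     connected_on {..<n} (pot_edges n cen eps) \<and>
     E \<subseteq> pot_edges n cen eps \<and> sym E \<and> connected_on {..<n} E \<and>
     (\<forall>i<n. 0 \<le> f i \<and> f i < 2 * pi) \<and>
     (\<forall>i<n. g i \<in> {-1, 1}) \<and>
     synchronized E cen f g \<and>
     (\<forall>(i,j)\<in>E. g i = - g j)"

definition hit :: "(nat \<times> nat) set \<Rightarrow> (nat \<Rightarrow> complex) \<Rightarrow> (nat \<Rightarrow> real) \<Rightarrow> (nat \<Rightarrow> int) \<Rightarrow> nat \<Rightarrow> real \<Rightarrow> nat \<Rightarrow> bool" where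
  "hit E cen f g i t j \<longleftrightarrow> (i, j) \<in> E \<and> pos cen f g i t = lp cen i j"

(* Event sequence of a starving robot which at time t0 is on circle i:
   ev k = (circle a_k, time tau_k) where at time tau_k the robot, on circle a_k, reaches a
   link position and shifts to circle a_(k+1).  (A robot sitting on a link position at time t0
   is regarded as arriving there, i.e. it shifts at time t0.) *)
fun ev :: "(nat \<times> nat) set \<Rightarrow> (nat \<Rightarrow> complex) \<Rightarrow> (nat \<Rightarrow> real) \<Rightarrow> (nat \<Rightarrow> int) \<Rightarrow> nat \<Rightarrow> real \<Rightarrow> nat \<Rightarrow> nat \<times> real" where
  "ev E cen f g i t0 0 = (i, Inf {s. t0 \<le> s \<and> (\<exists>j. hit E cen f g i s j)})"
| "ev E cen f g i t0 (Suc k) =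
     (let a = fst (ev E cen f g i t0 k); tau = snd (ev E cen f g i t0 k);
          b = (THE j. hit E cen f g a tau j)
      in (b, Inf {s. tau < s \<and> (\<exists>j. hit E cen f g b s j)}))"

(* circle on which the starving robot is at time s >= t0
   (on circle a_k during (tau_(k-1), tau_k]) *)
definition trc :: "(nat \<times> nat) set \<Rightarrow> (nat \<Rightarrow> complex) \<Rightarrow> (nat \<Rightarrow> real) \<Rightarrow> (nat \<Rightarrow> int) \<Rightarrow> nat \<Rightarrow> real \<Rightarrow> real \<Rightarrow> nat" where
  "trc E cen f g i t0 s = fst (ev E cen f g i t0 (LEAST k. s \<le> snd (ev E cen f g i t0 k)))"

(* the path of length l along the ring of the robot (circle i, time t0) ends at the point P.
   Lengths are arc lengths: a circle (length 2 pi) is traversed in one time unit. *)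
definition reaches :: "(nat \<times> nat) set \<Rightarrow> (nat \<Rightarrow> complex) \<Rightarrow> (nat \<Rightarrow> real) \<Rightarrow> (nat \<Rightarrow> int) \<Rightarrow> nat \<Rightarrow> real \<Rightarrow> complex \<Rightarrow> real \<Rightarrow> bool" where
  "reaches E cen f g i t0 P l \<longleftrightarrow>
     0 \<le> l \<and> pos cen f g (trc E cen f g i t0 (t0 + l / (2 * pi))) (t0 + l / (2 * pi)) = P"

definition crosses_dir :: "(nat \<times> nat) set \<Rightarrow> (nat \<Rightarrow> complex) \<Rightarrow> (nat \<Rightarrow> real) \<Rightarrow> (nat \<Rightarrow> int) \<Rightarrow> nat \<Rightarrow> real \<Rightarrow> nat \<Rightarrow> nat \<Rightarrow> real \<Rightarrow> bool" where
  "crosses_dir E cen f g i t0 a b l \<longleftrightarrow>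
     0 \<le> l \<and> (\<exists>k. snd (ev E cen f g i t0 k) = t0 + l / (2 * pi) \<and>
                 fst (ev E cen f g i t0 k) = a \<and> fst (ev E cen f g i t0 (Suc k)) = b)"

definition crosses :: "(nat \<times> nat) set \<Rightarrow> (nat \<Rightarrow> complex) \<Rightarrow> (nat \<Rightarrow> real) \<Rightarrow> (nat \<Rightarrow> int) \<Rightarrow> nat \<Rightarrow> real \<Rightarrow> complex \<Rightarrow> real \<Rightarrow> bool" where
  "crosses E cen f g i t0 c l \<longleftrightarrow> (\<exists>a b. crosses_dir E cen f g i t0 a b l \<and> cp cen a b = c)"

definition self_crosses :: "(nat \<times> nat) set \<Rightarrow> (nat \<Rightarrow> complex) \<Rightarrow> (nat \<Rightarrow> real) \<Rightarrow> (nat \<Rightarrow> int) \<Rightarrow> nat \<Rightarrow> real \<Rightarrow> complex \<Rightarrow> bool" where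
  "self_crosses E cen f g i t0 c \<longleftrightarrow>
     (\<exists>a b l1 l2. crosses_dir E cen f g i t0 a b l1 \<and> crosses_dir E cen f g i t0 b a l2 \<and> cp cen a b = c)"

definition tie_length :: "(nat \<times> nat) set \<Rightarrow> (nat \<Rightarrow> complex) \<Rightarrow> (nat \<Rightarrow> real) \<Rightarrow> (nat \<Rightarrow> int) \<Rightarrow> nat \<Rightarrow> real \<Rightarrow> real \<Rightarrow> bool" where
  "tie_length E cen f g i t0 T \<longleftrightarrow>
     (\<exists>c l1 l2. self_crosses E cen f g i t0 c \<and>
        crosses E cen f g i t0 c l1 \<and> crosses E cen f g i t0 c l2 \<and> l1 < l2 \<and>
        (\<forall>l. l1 < l \<and> l < l2 \<longrightarrow> \<not> crosses E cen f g i t0 c l) \<and>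
        T = l2 - l1)"

(* robot on circle i' prevents robot on circle i (both at time t0) from starving *)
definition prevents :: "(nat \<times> nat) set \<Rightarrow> (nat \<Rightarrow> complex) \<Rightarrow> (nat \<Rightarrow> real) \<Rightarrow> (nat \<Rightarrow> int) \<Rightarrow> nat \<Rightarrow> nat \<Rightarrow> real \<Rightarrow> bool" where
  "prevents E cen f g i' i t0 \<longleftrightarrow>
     (\<exists>c l. crosses E cen f g i t0 c l \<and> crosses E cen f g i' t0 c l)"

definition ring_simple_path :: "(nat \<times> nat) set \<Rightarrow> (nat \<Rightarrow> complex) \<Rightarrow> (nat \<Rightarrow> real) \<Rightarrow> (nat \<Rightarrow> int) \<Rightarrow> nat \<Rightarrow> nat \<Rightarrow> real \<Rightarrow> real \<Rightarrow> bool" where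
  "ring_simple_path E cen f g i j t0 l \<longleftrightarrow>
     reaches E cen f g i t0 (pos cen f g j t0) l \<and>
     (\<forall>l'. 0 < l' \<and> l' \<le> l \<longrightarrow> \<not> reaches E cen f g i t0 (pos cen f g i t0) l')"

definition same_ring :: "(nat \<times> nat) set \<Rightarrow> (nat \<Rightarrow> complex) \<Rightarrow> (nat \<Rightarrow> real) \<Rightarrow> (nat \<Rightarrow> int) \<Rightarrow> nat \<Rightarrow> nat \<Rightarrow> real \<Rightarrow> bool" where
  "same_ring E cen f g i j t0 \<longleftrightarrow> (\<exists>l. reaches E cen f g i t0 (pos cen f g j t0) l)"

(* configuration of an m-partial SCS at some time: the set occ of occupied circles
   (one robot per occupied circle, each at the scheduled position of its circle) *)
definition partial_config :: "nat \<Rightarrow> nat \<Rightarrow> nat set \<Rightarrow> bool" where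
  "partial_config n m occ \<longleftrightarrow> occ \<subseteq> {..<n} \<and> card occ = m"

end

theory Submission
  imports Defs
begin



lemma cis_eq_int: assumes "cis a = cis b" shows "\<exists>k::int. a = b + 2 * pi * of_int k"
proof -
  have "cos a = cos b" "sin a = sin b" using assms
    by (metis cis.sel(1), metis cis.sel(2))
  thus ?thesis using sin_cos_eq_iff by metis
qed

lemma cis_2pi_int: "cis (2 * pi * of_int k) = 1"
  by (simp add: cis.ctr complex_eq_iff cos_int_2pin sin_int_2pin)

lemma pos_shift:
  fixes K :: int
  shows "pos cen f g i (s + of_int K) = pos cen f g i s"
proof -
  have "f i + 2 * pi * of_int (g i) * (s + of_int K) = (f i + 2 * pi * of_int (g i) * s) + 2 * pi * of_int (g i * K)"
    by (simp add: algebra_simps)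
  thus ?thesis unfolding pos_def by (simp add: cis_mult[symmetric] cis_2pi_int)
qed

lemma pos_eq_int:
  assumes "g i \<in> {-1,1}" "pos cen f g i s = pos cen f g i s'"
  shows "\<exists>K::int. s = s' + of_int K"
proof -
  from assms(2) have "cis (f i + 2 * pi * of_int (g i) * s) = cis (f i + 2 * pi * of_int (g i) * s')"
    unfolding pos_def by simp
  then obtain k::int where k: "f i + 2 * pi * of_int (g i) * s = f i + 2 * pi * of_int (g i) * s' + 2 * pi * of_int k"
    using cis_eq_int by blast
  hence "2 * pi * (of_int (g i) * s) = 2 * pi * (of_int (g i) * s' + of_int k)" by (simp add: algebra_simps)
  hence "of_int (g i) * s = of_int (g i) * s' + of_int k" by simp
  hence "of_int (g i) * (s - s') = of_int k" by (simp add: algebra_simps)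
  hence "s - s' = of_int (g i * k)" using assms(1) by auto
  thus ?thesis by (intro exI[of _ "g i * k"]) simp
qed

lemma cmod_pos: "cmod (pos cen f g i s - cen i) = 1"
  unfolding pos_def by simp

lemma cp_eq: "cp cen a b = (cen a + cen b) / 2"
  unfolding cp_def lp_def
proof -
  have "(cen a - cen b) / complex_of_real (cmod (cen a - cen b)) = - ((cen b - cen a) / complex_of_real (cmod (cen b - cen a)))"
    by (simp add: norm_minus_commute minus_divide_left)
  thus "(cen a + (cen b - cen a) / complex_of_real (cmod (cen b - cen a)) + (cen b + (cen a - cen b) / complex_of_real (cmod (cen a - cen b)))) / 2 = (cen a + cen b) / 2"
    by simp
qed


lemma spheres_meet:
  fixes p q :: complex
  assumes "cmod (q - p) \<le> 2"
  shows "sphere p 1 \<inter> sphere q 1 \<noteq> {}"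
proof (cases "q = p")
  case True
  have "p + 1 \<in> sphere p 1 \<inter> sphere q 1" using True by (simp add: dist_norm)
  thus ?thesis by blast
next
  case False
  define z where "z = q - p"
  define d where "d = cmod z"
  have d0: "d > 0" using False unfolding d_def z_def by simp
  have d2: "d \<le> 2" using assms unfolding d_def z_def .
  define h where "h = sqrt (1 - d^2/4)"
  have hh: "h^2 = 1 - d^2/4"
  proof -
    have "d^2 \<le> 2^2" using d2 d0 by (intro power_mono) auto
    hence "0 \<le> 1 - d^2/4" by simp
    thus ?thesis by (simp add: h_def)
  qed
  define w where "w = Complex (1/2) (h/d)"
  define w' where "w' = Complex (-1/2) (h/d)"
  have key: "sqrt ((1/2)^2 + (h/d)^2) = 1/d"
  proof -
    have "(1/2)^2 + (h/d)^2 = (1/d)^2" using hh d0 by (simp add: field_simps power2_eq_square)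
    thus ?thesis using d0 by simp
  qed
  have cw: "cmod w = 1/d" unfolding w_def cmod_def using key by simp
  have cw': "cmod w' = 1/d" unfolding w'_def cmod_def using key by simp
  have w'w: "w - 1 = w'" unfolding w_def w'_def by (simp add: complex_eq_iff)
  define x where "x = p + z * w"
  have "dist p x = 1" unfolding x_def dist_norm
    using cw d0 by (simp add: norm_mult d_def[symmetric] norm_minus_commute)
  moreover have "dist q x = 1"
  proof -
    have "q - x = - (z * (w - 1))" unfolding x_def z_def by (simp add: algebra_simps)
    hence "cmod (q - x) = d * cmod w'" using w'w by (simp add: norm_mult d_def)
    thus ?thesis using cw' d0 by (simp add: dist_norm)
  qed
  ultimately show ?thesis by auto
qed


lemma apollonius:
  fixes x A B :: complex
  shows "cmod (x - A)^2 + cmod (x - B)^2 = 2 * cmod (x - (A + B)/2)^2 + cmod (A - B)^2 / 2"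
  unfolding cmod_power2 by (simp add: power2_eq_square field_simps)

locale scs_ctx =
  fixes n cen eps E f g
  assumes scs: "SCS n cen eps E f g"
begin

lemma eps_bd: "0 < eps" "eps < 1/2" using scs unfolding SCS_def by auto

lemma E_edge: assumes "(a,b) \<in> E"
  shows "a < n" "b < n" "a \<noteq> b" "cmod (cen b - cen a) \<le> 2 + eps"
  using assms scs unfolding SCS_def pot_edges_def
  by (auto simp: dist_norm norm_minus_commute)

lemma symE: "(a,b) \<in> E \<Longrightarrow> (b,a) \<in> E"
  using scs unfolding SCS_def by (meson symD)

lemma g_pm: "i < n \<Longrightarrow> g i \<in> {-1,1}" using scs unfolding SCS_def by auto

lemma sync: "(a,b) \<in> E \<Longrightarrow> pos cen f g a t = lp cen a b \<longleftrightarrow> pos cen f g b t = lp cen b a"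
  using scs unfolding SCS_def synchronized_def by auto

lemma disj: "i < n \<Longrightarrow> j < n \<Longrightarrow> i \<noteq> j \<Longrightarrow> sphere (cen i) 1 \<inter> sphere (cen j) 1 = {}"
  using scs unfolding SCS_def by auto

lemma sep: assumes "i < n" "j < n" "i \<noteq> j" shows "2 < cmod (cen j - cen i)"
  using spheres_meet[of "cen j" "cen i"] disj[OF assms] by force

lemma lp_unique:
  assumes "(i,j) \<in> E" "(i,j') \<in> E" "lp cen i j = lp cen i j'"
  shows "j = j'"
proof (rule ccontr)
  assume ne: "j \<noteq> j'"
  define z where "z = cen j - cen i"
  define z' where "z' = cen j' - cen i"
  define D where "D = cmod z"
  define D' where "D' = cmod z'"
  have D: "2 < D" "D \<le> 2 + eps" using sep[of i j] E_edge[OF assms(1)] unfolding D_def z_def by auto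
  have D': "2 < D'" "D' \<le> 2 + eps" using sep[of i j'] E_edge[OF assms(2)] unfolding D'_def z'_def by auto
  define e where "e = z / of_real D"
  have e: "z' / of_real D' = e" using assms(3) unfolding lp_def e_def z_def z'_def D_def D'_def by simp
  have "z \<noteq> 0" using D(1) unfolding D_def by auto
  hence ce: "cmod e = 1" unfolding e_def by (simp add: norm_divide D_def)
  have "z = of_real D * e" unfolding e_def using D by simp
  moreover have "z' = of_real D' * e" using e D' by (auto simp: field_simps)
  ultimately have "cen j - cen j' = of_real (D - D') * e" unfolding z_def z'_def by (simp add: algebra_simps)
  hence "cmod (cen j - cen j') = cmod (of_real (D - D') * e)" by simp
  also have "\<dots> = \<bar>D - D'\<bar>" by (simp only: norm_mult norm_of_real ce) simp
  also have "\<dots> < 2" using D D' eps_bd by auto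
  finally show False using sep[of j' j] ne E_edge[OF assms(1)] E_edge[OF assms(2)] by auto
qed

lemma cp_member:
  assumes "(a,b) \<in> E" "(a',b') \<in> E" "cp cen a b = cp cen a' b'" "x = a' \<or> x = b'"
  shows "x = a \<or> x = b"
proof (rule ccontr)
  assume nx: "\<not> (x = a \<or> x = b)"
  have xn: "x < n" using assms E_edge by auto
  have an: "a < n" "b < n" using E_edge assms by auto
  have m: "(cen a + cen b)/2 = (cen a' + cen b')/2" using assms(3) by (simp add: cp_eq)
  have "cmod (cen x - (cen a' + cen b')/2) = cmod (cen b' - cen a') / 2"
    using assms(4)
  proof
    assume "x = a'"
    hence "cen x - (cen a' + cen b')/2 = - ((cen b' - cen a') / 2)" by (simp add: field_simps)
    thus ?thesis by (simp only: norm_minus_cancel norm_divide) simp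
  next
    assume "x = b'"
    hence "cen x - (cen a' + cen b')/2 = (cen b' - cen a') / 2" by (simp add: field_simps)
    thus ?thesis by (simp only: norm_divide) simp
  qed
  hence h1: "cmod (cen x - (cen a + cen b)/2) \<le> 5/4" using E_edge[OF assms(2)] eps_bd by (simp only: m)
  have h2: "cmod (cen a - cen b) \<le> 5/2" using E_edge[OF assms(1)] eps_bd by (simp add: norm_minus_commute)
  have "cmod (cen x - (cen a + cen b)/2)^2 \<le> (5/4)^2" using h1 by (intro power_mono) auto
  moreover have "cmod (cen a - cen b)^2 \<le> (5/2)^2" using h2 by (intro power_mono) auto
  ultimately have s: "cmod (cen x - cen a)^2 + cmod (cen x - cen b)^2 \<le> 25/4"
    using apollonius[of "cen x" "cen a" "cen b"] unfolding power2_eq_square by linarith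
  have "2 < cmod (cen x - cen a)" using sep[of a x] nx xn an by auto
  hence "2^2 < cmod (cen x - cen a)^2" by (intro power_strict_mono) auto
  moreover have "2 < cmod (cen x - cen b)" using sep[of b x] nx xn an by auto
  hence "2^2 < cmod (cen x - cen b)^2" by (intro power_strict_mono) auto
  ultimately show False using s by simp
qed

lemma cp_unique:
  assumes "(a,b) \<in> E" "(a',b') \<in> E" "cp cen a b = cp cen a' b'"
  shows "(a',b') = (a,b) \<or> (a',b') = (b,a)"
  using cp_member[OF assms, of a'] cp_member[OF assms, of b'] E_edge(3)[OF assms(2)] by auto

end


lemma fin_min:
  fixes P :: "real \<Rightarrow> bool"
  assumes "finite {s. P s \<and> A \<le> s \<and> s \<le> B}" "P s1" "R s1" "A \<le> s1" "s1 \<le> B"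
    and "\<And>s. R s \<Longrightarrow> A \<le> s" "\<And>s. R s \<Longrightarrow> s \<le> B \<Longrightarrow> True"
    and "\<And>s. P s \<Longrightarrow> R s \<Longrightarrow> B < s \<Longrightarrow> True"
  shows "\<exists>m. P m \<and> R m \<and> m \<le> B \<and> (\<forall>s. P s \<and> R s \<and> s \<le> B \<longrightarrow> m \<le> s)"
proof -
  define M where "M = {s. P s \<and> R s \<and> A \<le> s \<and> s \<le> B}"
  have fM: "finite M" unfolding M_def by (rule finite_subset[OF _ assms(1)]) auto
  have "s1 \<in> M" unfolding M_def using assms by auto
  hence ne: "M \<noteq> {}" by auto
  have "Min M \<in> M" using fM ne by simp
  moreover have "\<forall>s. P s \<and> R s \<and> s \<le> B \<longrightarrow> Min M \<le> s"
    using fM assms(6) unfolding M_def by (auto intro: Min_le)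
  ultimately show ?thesis unfolding M_def by auto
qed

context scs_ctx begin

abbreviation hs :: "nat \<Rightarrow> real \<Rightarrow> bool" where
  "hs i s \<equiv> \<exists>j. hit E cen f g i s j"

abbreviation "HIT \<equiv> hit E cen f g"
abbreviation "POS \<equiv> pos cen f g"

lemma hit_E: "HIT i s j \<Longrightarrow> (i,j) \<in> E" unfolding hit_def by simp

lemma hit_shift: "HIT i (s + of_int K) j \<longleftrightarrow> HIT i s j"
  unfolding hit_def by (simp add: pos_shift)

lemma hs_shift: "hs i (s + of_int K) \<longleftrightarrow> hs i s"
  using hit_shift by simp

lemma hit_diff: assumes "HIT i s j" "HIT i s' j" shows "\<exists>K::int. s' = s + of_int K"
proof -
  have "i < n" using E_edge hit_E assms by blast
  thus ?thesis using pos_eq_int[of g i cen f s' s] g_pm assms unfolding hit_def by auto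
qed

lemma hit_sym: "HIT a s b \<Longrightarrow> HIT b s a"
  unfolding hit_def using sync symE by blast

lemma hit_the: "HIT a s b \<Longrightarrow> (THE j. HIT a s j) = b"
  by (rule the_equality) (auto simp: hit_def intro: lp_unique)

lemma hs_fin: "finite {s. hs i s \<and> A \<le> s \<and> s \<le> B}"
proof -
  have sub: "{s. hs i s \<and> A \<le> s \<and> s \<le> B} \<subseteq> (\<Union>j\<in>{..<n}. {s. HIT i s j \<and> A \<le> s \<and> s \<le> B})"
  proof
    fix s assume "s \<in> {s. hs i s \<and> A \<le> s \<and> s \<le> B}"
    then obtain j where j: "HIT i s j" "A \<le> s" "s \<le> B" by blast
    have "j < n" using E_edge(2)[OF hit_E[OF j(1)]] .
    thus "s \<in> (\<Union>j\<in>{..<n}. {s. HIT i s j \<and> A \<le> s \<and> s \<le> B})" using j by blast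
  qed
  have fj: "finite {s. HIT i s j \<and> A \<le> s \<and> s \<le> B}" for j
  proof (cases "\<exists>s0. HIT i s0 j")
    case False thus ?thesis by simp
  next
    case True
    then obtain s0 where s0: "HIT i s0 j" by blast
    have "{s. HIT i s j \<and> A \<le> s \<and> s \<le> B} \<subseteq> (\<lambda>K. s0 + of_int K) ` {\<lceil>A - s0\<rceil>..\<lfloor>B - s0\<rfloor>}"
    proof
      fix s assume "s \<in> {s. HIT i s j \<and> A \<le> s \<and> s \<le> B}"
      hence s: "HIT i s j" "A \<le> s" "s \<le> B" by auto
      then obtain K::int where K: "s = s0 + of_int K" using hit_diff[OF s0] by blast
      have "\<lceil>A - s0\<rceil> \<le> K" using s K by (simp add: ceiling_le_iff)
      moreover have "K \<le> \<lfloor>B - s0\<rfloor>" using s K by (simp add: le_floor_iff)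
      ultimately show "s \<in> (\<lambda>K. s0 + of_int K) ` {\<lceil>A - s0\<rceil>..\<lfloor>B - s0\<rfloor>}" using K by auto
    qed
    thus ?thesis by (rule finite_subset) simp
  qed
  have "finite (\<Union>j\<in>{..<n}. {s. HIT i s j \<and> A \<le> s \<and> s \<le> B})"
    by (rule finite_UN_I) (simp_all add: fj)
  thus ?thesis by (rule finite_subset[OF sub])
qed

lemma min_gt:
  assumes "hs i s0"
  shows "\<exists>m. hs i m \<and> \<tau> < m \<and> (\<forall>s. hs i s \<and> \<tau> < s \<longrightarrow> m \<le> s)"
proof -
  define s1 where "s1 = s0 + of_int (\<lfloor>\<tau> - s0\<rfloor> + 1)"
  have h1: "hs i s1" unfolding s1_def using hs_shift assms by blast
  have "\<tau> < s1" "s1 \<le> \<tau> + 1" unfolding s1_def by linarith+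
  from fin_min[where P="hs i" and R="\<lambda>s. \<tau> < s" and A=\<tau> and B="\<tau>+1", OF hs_fin h1 this(1) _ this(2)]
  obtain m where m: "hs i m" "\<tau> < m" "m \<le> \<tau> + 1" "\<forall>s. hs i s \<and> \<tau> < s \<and> s \<le> \<tau> + 1 \<longrightarrow> m \<le> s"
    using \<open>\<tau> < s1\<close> by force
  have "\<forall>s. hs i s \<and> \<tau> < s \<longrightarrow> m \<le> s"
  proof (intro allI impI)
    fix s assume s: "hs i s \<and> \<tau> < s"
    show "m \<le> s" proof (cases "s \<le> \<tau> + 1")
      case True thus ?thesis using m(4) s by blast
    next
      case False thus ?thesis using m(3) by linarith
    qed
  qed
  thus ?thesis using m(1) m(2) by (intro exI[of _ m] conjI)
qed

lemma min_ge:
  assumes "hs i s0"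
  shows "\<exists>m. hs i m \<and> \<tau> \<le> m \<and> (\<forall>s. hs i s \<and> \<tau> \<le> s \<longrightarrow> m \<le> s)"
proof -
  define s1 where "s1 = s0 + of_int (\<lceil>\<tau> - s0\<rceil>)"
  have h1: "hs i s1" unfolding s1_def using hs_shift assms by blast
  have "\<tau> \<le> s1" "s1 \<le> \<tau> + 1" unfolding s1_def by linarith+
  from fin_min[where P="hs i" and R="\<lambda>s. \<tau> \<le> s" and A=\<tau> and B="\<tau>+1", OF hs_fin h1 this(1) _ this(2)]
  obtain m where m: "hs i m" "\<tau> \<le> m" "m \<le> \<tau> + 1" "\<forall>s. hs i s \<and> \<tau> \<le> s \<and> s \<le> \<tau> + 1 \<longrightarrow> m \<le> s"
    using \<open>\<tau> \<le> s1\<close> by force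
  have "\<forall>s. hs i s \<and> \<tau> \<le> s \<longrightarrow> m \<le> s"
  proof (intro allI impI)
    fix s assume s: "hs i s \<and> \<tau> \<le> s"
    show "m \<le> s" proof (cases "s \<le> \<tau> + 1")
      case True thus ?thesis using m(4) s by blast
    next
      case False thus ?thesis using m(3) by linarith
    qed
  qed
  thus ?thesis using m(1) m(2) by (intro exI[of _ m] conjI)
qed

end


context scs_ctx begin

abbreviation "EV \<equiv> ev E cen f g"
definition nxt where "nxt b \<tau> = Inf {s. \<tau> < s \<and> hs b s}"
definition fst0 where "fst0 i t = Inf {s. t \<le> s \<and> hs i s}"
definition step :: "nat \<times> real \<Rightarrow> nat \<times> real" where
  "step p = (let b = THE j. HIT (fst p) (snd p) j in (b, nxt b (snd p)))"
definition sh :: "int \<Rightarrow> nat \<times> real \<Rightarrow> nat \<times> real" where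
  "sh K p = (fst p, snd p + of_int K)"

lemma ev0: "EV i t0 0 = (i, fst0 i t0)" by (simp add: fst0_def)
lemma evS: "EV i t0 (Suc k) = step (EV i t0 k)" by (simp add: step_def nxt_def Let_def)

lemma nxt_prop:
  assumes "hs b s0"
  shows "hs b (nxt b \<tau>)" "\<tau> < nxt b \<tau>" "\<And>s. hs b s \<Longrightarrow> \<tau> < s \<Longrightarrow> nxt b \<tau> \<le> s"
proof -
  obtain m where m: "hs b m" "\<tau> < m" "\<forall>s. hs b s \<and> \<tau> < s \<longrightarrow> m \<le> s" using min_gt[OF assms] by blast
  have "nxt b \<tau> = m" unfolding nxt_def by (rule cInf_eq_minimum) (use m in auto)
  thus "hs b (nxt b \<tau>)" "\<tau> < nxt b \<tau>" "\<And>s. hs b s \<Longrightarrow> \<tau> < s \<Longrightarrow> nxt b \<tau> \<le> s" using m by auto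
qed

lemma fst0_prop:
  assumes "hs b s0"
  shows "hs b (fst0 b \<tau>)" "\<tau> \<le> fst0 b \<tau>" "\<And>s. hs b s \<Longrightarrow> \<tau> \<le> s \<Longrightarrow> fst0 b \<tau> \<le> s"
proof -
  obtain m where m: "hs b m" "\<tau> \<le> m" "\<forall>s. hs b s \<and> \<tau> \<le> s \<longrightarrow> m \<le> s" using min_ge[OF assms] by blast
  have "fst0 b \<tau> = m" unfolding fst0_def by (rule cInf_eq_minimum) (use m in auto)
  thus "hs b (fst0 b \<tau>)" "\<tau> \<le> fst0 b \<tau>" "\<And>s. hs b s \<Longrightarrow> \<tau> \<le> s \<Longrightarrow> fst0 b \<tau> \<le> s" using m by auto
qed

lemma nxt_shift:
  assumes "hs b s0"
  shows "nxt b (\<tau> + of_int K) = nxt b \<tau> + of_int K"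
  unfolding nxt_def[of b "\<tau> + of_int K"]
proof (rule cInf_eq_minimum)
  show "nxt b \<tau> + of_int K \<in> {s. \<tau> + of_int K < s \<and> hs b s}"
    using nxt_prop[OF assms, of \<tau>] hs_shift by auto
next
  fix s assume "s \<in> {s. \<tau> + of_int K < s \<and> hs b s}"
  hence s: "\<tau> < s - of_int K" "hs b s" by auto
  have "hs b ((s - of_int K))" using hs_shift[of b "s - of_int K" K] s(2) by simp
  hence "nxt b \<tau> \<le> s - of_int K" using nxt_prop(3)[OF assms] s(1) by blast
  thus "nxt b \<tau> + of_int K \<le> s" by simp
qed

lemma fst0_shift:
  assumes "hs b s0"
  shows "fst0 b (\<tau> + of_int K) = fst0 b \<tau> + of_int K"
  unfolding fst0_def[of b "\<tau> + of_int K"]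
proof (rule cInf_eq_minimum)
  show "fst0 b \<tau> + of_int K \<in> {s. \<tau> + of_int K \<le> s \<and> hs b s}"
    using fst0_prop[OF assms, of \<tau>] hs_shift by auto
next
  fix s assume "s \<in> {s. \<tau> + of_int K \<le> s \<and> hs b s}"
  hence s: "\<tau> \<le> s - of_int K" "hs b s" by auto
  have "hs b ((s - of_int K))" using hs_shift[of b "s - of_int K" K] s(2) by simp
  hence "fst0 b \<tau> \<le> s - of_int K" using fst0_prop(3)[OF assms] s(1) by blast
  thus "fst0 b \<tau> + of_int K \<le> s" by simp
qed

lemma step_prop:
  assumes "hs (fst p) (snd p)"
  shows "HIT (fst p) (snd p) (fst (step p))" "hs (fst (step p)) (snd (step p))"
    "snd p < snd (step p)" "\<And>s. hs (fst (step p)) s \<Longrightarrow> snd p < s \<Longrightarrow> snd (step p) \<le> s"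
proof -
  obtain j where j: "HIT (fst p) (snd p) j" using assms by blast
  have st: "step p = (j, nxt j (snd p))" unfolding step_def using hit_the[OF j] by simp
  have hj: "hs j (snd p)" using hit_sym[OF j] by blast
  show "HIT (fst p) (snd p) (fst (step p))" using st j by simp
  show "hs (fst (step p)) (snd (step p))" using st nxt_prop(1)[OF hj] by simp
  show "snd p < snd (step p)" using st nxt_prop(2)[OF hj] by simp
  show "\<And>s. hs (fst (step p)) s \<Longrightarrow> snd p < s \<Longrightarrow> snd (step p) \<le> s" using st nxt_prop(3)[OF hj] by simp
qed

lemma step_shift:
  assumes "hs (fst p) (snd p)"
  shows "step (sh K p) = sh K (step p)"
proof -
  obtain j where j: "HIT (fst p) (snd p) j" using assms by blast
  have j': "HIT (fst p) (snd p + of_int K) j" using j hit_shift by blast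
  have hj: "hs j (snd p)" using hit_sym[OF j] by blast
  have "step p = (j, nxt j (snd p))" unfolding step_def using hit_the[OF j] by simp
  moreover have "step (sh K p) = (j, nxt j (snd p + of_int K))" unfolding step_def sh_def using hit_the[OF j'] by simp
  ultimately show ?thesis using nxt_shift[OF hj] unfolding sh_def by simp
qed

lemma step_inj:
  assumes "hs (fst p) (snd p)" "hs (fst q) (snd q)" "step p = step q"
  shows "p = q"
proof -
  define b where "b = fst (step p)"
  have hp: "HIT (fst p) (snd p) b" using step_prop(1)[OF assms(1)] b_def by simp
  have hq: "HIT (fst q) (snd q) b" using step_prop(1)[OF assms(2)] b_def assms(3) by simp
  have hp': "HIT b (snd p) (fst p)" using hit_sym[OF hp] .
  have hq': "HIT b (snd q) (fst q)" using hit_sym[OF hq] .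
  have "snd p = snd q"
  proof (rule ccontr)
    assume "snd p \<noteq> snd q"
    hence "snd p < snd q \<or> snd q < snd p" by linarith
    thus False
    proof
      assume lt: "snd p < snd q"
      have "snd (step p) \<le> snd q" using step_prop(4)[OF assms(1), of "snd q"] hq' lt b_def by blast
      moreover have "snd q < snd (step q)" using step_prop(3)[OF assms(2)] .
      ultimately show False using assms(3) by simp
    next
      assume lt: "snd q < snd p"
      have "snd (step q) \<le> snd p" using step_prop(4)[OF assms(2), of "snd p"] hp' lt b_def assms(3) by auto
      moreover have "snd p < snd (step p)" using step_prop(3)[OF assms(1)] .
      ultimately show False using assms(3) by simp
    qed
  qed
  moreover have "fst p = fst q"
  proof -
    have "(b, fst p) \<in> E" "(b, fst q) \<in> E" using hit_E hp' hq' by auto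
    moreover have "lp cen b (fst p) = lp cen b (fst q)" using hp' hq' \<open>snd p = snd q\<close> unfolding hit_def by simp
    ultimately show ?thesis using lp_unique by blast
  qed
  ultimately show ?thesis by (simp add: prod_eq_iff)
qed

end


context scs_ctx begin

context
  fixes i :: nat and t0 :: real
  assumes ok: "\<exists>s. hs i s"
begin

lemma ev_valid: "hs (fst (EV i t0 k)) (snd (EV i t0 k))"
proof (induction k)
  case 0
  from ok obtain s0 where "hs i s0" by blast
  thus ?case using fst0_prop(1) ev0 by simp
next
  case (Suc k) thus ?case using step_prop(2) evS by simp
qed

lemma ev_hit: "HIT (fst (EV i t0 k)) (snd (EV i t0 k)) (fst (EV i t0 (Suc k)))"
  using step_prop(1)[OF ev_valid] evS by simp

lemma ev_lt: "snd (EV i t0 k) < snd (EV i t0 (Suc k))"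
  using step_prop(3)[OF ev_valid] evS by simp

lemma ev_less: "k < k' \<Longrightarrow> snd (EV i t0 k) < snd (EV i t0 k')"
  using lift_Suc_mono_less[of "\<lambda>k. snd (EV i t0 k)"] ev_lt by blast

lemma ev_le: "k \<le> k' \<Longrightarrow> snd (EV i t0 k) \<le> snd (EV i t0 k')"
  using ev_less by (cases "k = k'") (auto simp: less_imp_le)

lemma ev_less_iff: "snd (EV i t0 k) < snd (EV i t0 k') \<longleftrightarrow> k < k'"
  using ev_less ev_le by (meson leD linorder_le_less_linear)

lemma ev_eq_iff: "snd (EV i t0 k) = snd (EV i t0 k') \<longleftrightarrow> k = k'"
  using ev_less by (metis less_irrefl linorder_neqE_nat)

lemma ev_ge: "t0 \<le> snd (EV i t0 k)"
proof -
  from ok obtain s0 where "hs i s0" by blast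
  hence "t0 \<le> snd (EV i t0 0)" using fst0_prop(2) ev0 by simp
  thus ?thesis using ev_le[of 0 k] by simp
qed

lemma ev_circ: "fst (EV i t0 k) < n"
  using ev_valid[of k] hit_E E_edge(1) by blast

lemma ev_unb: "\<exists>k. X \<le> snd (EV i t0 k)"
proof (rule ccontr)
  assume "\<not> ?thesis"
  hence lt: "\<And>k. snd (EV i t0 k) < X" by (meson not_le)
  have sub: "range (\<lambda>k. snd (EV i t0 k)) \<subseteq> (\<Union>a\<in>{..<n}. {s. hs a s \<and> t0 \<le> s \<and> s \<le> X})"
  proof
    fix x assume "x \<in> range (\<lambda>k. snd (EV i t0 k))"
    then obtain k where x: "x = snd (EV i t0 k)" by blast
    show "x \<in> (\<Union>a\<in>{..<n}. {s. hs a s \<and> t0 \<le> s \<and> s \<le> X})"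
      using ev_circ[of k] ev_valid[of k] ev_ge[of k] lt[of k] x by auto
  qed
  have "finite (\<Union>a\<in>{..<n}. {s. hs a s \<and> t0 \<le> s \<and> s \<le> X})"
    by (rule finite_UN_I) (simp_all add: hs_fin)
  hence fr: "finite (range (\<lambda>k. snd (EV i t0 k)))" by (rule finite_subset[OF sub])
  have "inj (\<lambda>k. snd (EV i t0 k))" unfolding inj_def using ev_eq_iff by blast
  hence "finite (UNIV :: nat set)" using finite_imageD[OF fr] by blast
  thus False by simp
qed

lemma ev_least:
  assumes "t0 \<le> S"
  defines "k \<equiv> LEAST m. S \<le> snd (EV i t0 m)"
  shows "S \<le> snd (EV i t0 k)" "\<And>m. m < k \<Longrightarrow> snd (EV i t0 m) < S"
    "\<And>s. hs (fst (EV i t0 k)) s \<Longrightarrow> S \<le> s \<Longrightarrow> snd (EV i t0 k) \<le> s"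
proof -
  show k1: "S \<le> snd (EV i t0 k)" unfolding k_def using ev_unb[of S] by (rule LeastI_ex)
  show k2: "\<And>m. m < k \<Longrightarrow> snd (EV i t0 m) < S" unfolding k_def using not_less_Least by (metis not_le)
  fix s assume s: "hs (fst (EV i t0 k)) s" "S \<le> s"
  show "snd (EV i t0 k) \<le> s"
  proof (cases k)
    case 0
    from ok obtain s0 where "hs i s0" by blast
    moreover have "hs i s" using s(1) 0 ev0 by simp
    ultimately have "fst0 i t0 \<le> s" using fst0_prop(3) s(2) assms(1) by (meson order.trans)
    thus ?thesis using 0 ev0 by simp
  next
    case (Suc k')
    have "snd (EV i t0 k') < S" using k2 Suc by simp
    thus ?thesis using step_prop(4)[OF ev_valid[of k'], of s] s Suc evS by simp
  qed
qed

lemma trc_eq: "trc E cen f g i t0 S = fst (EV i t0 (LEAST m. S \<le> snd (EV i t0 m)))"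
  unfolding trc_def ..

end
end


context scs_ctx begin

lemma ar: "(x + 2 * pi * of_int K) / (2 * pi) = x / (2 * pi) + of_int K"
  by (simp add: field_simps)

context
  fixes i :: nat and t0 :: real
  assumes ok: "\<exists>s. hs i s"
begin

lemma ev_back: "EV i t0 (j + p) = sh K (EV i t0 j) \<Longrightarrow> EV i t0 p = sh K (EV i t0 0)"
proof (induction j)
  case 0 thus ?case by simp
next
  case (Suc j)
  have e1: "EV i t0 (Suc j + p) = step (EV i t0 (j + p))" using evS[of i t0 "j + p"] by simp
  have e2: "sh K (EV i t0 (Suc j)) = step (sh K (EV i t0 j))"
    using evS[of i t0 j] step_shift[OF ev_valid[OF ok, of t0 j], of K] by simp
  have st: "step (EV i t0 (j + p)) = step (sh K (EV i t0 j))" using Suc.prems e1 e2 by simp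
  have hsh: "hs (fst (sh K (EV i t0 j))) (snd (sh K (EV i t0 j)))"
    using ev_valid[OF ok, of t0 j] hs_shift unfolding sh_def by simp
  have "EV i t0 (j + p) = sh K (EV i t0 j)"
    by (rule step_inj[OF ev_valid[OF ok, of t0 "j + p"] hsh st])
  thus ?case by (rule Suc.IH)
qed

lemma ret:
  assumes "EV i t0 (j + p) = sh K (EV i t0 j)" "0 < p"
  shows "0 < K" "reaches E cen f g i t0 (POS i t0) (2 * pi * of_int K)"
proof -
  from ok obtain s0 where s0: "hs i s0" by blast
  have ep: "EV i t0 p = (i, fst0 i t0 + of_int K)" using ev_back[OF assms(1)] ev0 unfolding sh_def by simp
  have "snd (EV i t0 0) < snd (EV i t0 p)" by (rule ev_less[OF ok assms(2)])
  thus K0: "0 < K" using ep ev0 by simp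
  define T where "T = t0 + of_int K"
  have pm: "snd (EV i t0 (p - 1)) < T"
  proof (rule ccontr)
    define q where "q = EV i t0 (p - 1)"
    have pp: "p = Suc (p - 1)" using assms(2) by simp
    have sq: "EV i t0 p = step q" unfolding q_def by (subst pp) (rule evS)
    have sq2: "step q = (i, fst0 i t0 + of_int K)" using sq ep by simp
    have "HIT (fst q) (snd q) (fst (step q))" using step_prop(1)[OF ev_valid[OF ok, of t0 "p - 1"]] unfolding q_def .
    hence "HIT (fst q) (snd q) i" unfolding sq2 by simp
    hence hq: "hs i (snd q)" using hit_sym by (intro exI)
    have "snd q < snd (step q)" using step_prop(3)[OF ev_valid[OF ok, of t0 "p - 1"]] unfolding q_def .
    hence lt: "snd q < fst0 i t0 + of_int K" unfolding sq2 by simp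
    assume "\<not> snd (EV i t0 (p - 1)) < T"
    hence ge: "t0 \<le> snd q - of_int K" unfolding q_def T_def by simp
    have "hs i (snd q - of_int K)" using hs_shift[of i "snd q - of_int K" K] hq by simp
    hence "fst0 i t0 \<le> snd q - of_int K" by (rule fst0_prop(3)[OF s0 _ ge])
    thus False using lt by simp
  qed
  have L: "(LEAST m. T \<le> snd (EV i t0 m)) = p"
  proof (rule Least_equality)
    show "T \<le> snd (EV i t0 p)" using ep fst0_prop(2)[OF s0, of t0] unfolding T_def by simp
    fix m assume m: "T \<le> snd (EV i t0 m)"
    show "p \<le> m"
    proof (rule ccontr)
      assume "\<not> p \<le> m"
      hence "m \<le> p - 1" by simp
      hence "snd (EV i t0 m) \<le> snd (EV i t0 (p - 1))" by (rule ev_le[OF ok])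
      thus False using pm m by simp
    qed
  qed
  have "trc E cen f g i t0 T = i" unfolding trc_def L using ep by simp
  moreover have "t0 + 2 * pi * of_int K / (2 * pi) = T" unfolding T_def by simp
  ultimately show "reaches E cen f g i t0 (POS i t0) (2 * pi * of_int K)"
    unfolding reaches_def T_def using K0 pos_shift by simp
qed

end
end


context scs_ctx begin

lemma pos_sphere: "POS a s \<in> sphere (cen a) 1"
  using cmod_pos[of cen f g a s] by (simp add: dist_norm norm_minus_commute)

lemma fwd:
  assumes oki: "\<exists>s. hs i s" and okw: "\<exists>s. hs w s" and wn: "w < n"
    and R: "reaches E cen f g i t0 (POS w t0) l"
  shows "\<exists>K::int. 0 \<le> K \<and> l = 2 * pi * of_int K \<and> (K = 0 \<longrightarrow> w = i) \<and>
     (\<forall>x a b. 0 \<le> x \<longrightarrow> (crosses_dir E cen f g w t0 a b x \<longleftrightarrow> crosses_dir E cen f g i t0 a b (x + 2 * pi * of_int K))) \<and>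
     (\<forall>x P. 0 \<le> x \<longrightarrow> (reaches E cen f g w t0 P x \<longleftrightarrow> reaches E cen f g i t0 P (x + 2 * pi * of_int K)))"
proof -
  define S where "S = t0 + l / (2 * pi)"
  have l0: "0 \<le> l" using R unfolding reaches_def by simp
  have St: "t0 \<le> S" unfolding S_def using l0 by simp
  define k where "k = (LEAST m. S \<le> snd (EV i t0 m))"
  define a where "a = fst (EV i t0 k)"
  have pa: "POS a S = POS w t0" using R unfolding reaches_def trc_def a_def k_def S_def by simp
  have an: "a < n" unfolding a_def by (rule ev_circ[OF oki])
  have aw: "a = w"
  proof (rule ccontr)
    assume "a \<noteq> w"
    hence "sphere (cen a) 1 \<inter> sphere (cen w) 1 = {}" using disj an wn by blast
    moreover have "POS a S \<in> sphere (cen a) 1" by (rule pos_sphere)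
    moreover have "POS a S \<in> sphere (cen w) 1" unfolding pa by (rule pos_sphere)
    ultimately show False by blast
  qed
  obtain K where K: "S = t0 + of_int K" using pos_eq_int[of g w cen f S t0, OF g_pm[OF wn]] pa aw by blast
  have K0: "0 \<le> K" using St K by simp
  have lK: "l = 2 * pi * of_int K" using K unfolding S_def by (simp add: field_simps)
  have Sk: "S \<le> snd (EV i t0 k)" unfolding k_def by (rule ev_least(1)[OF oki St])
  have before: "\<And>m. m < k \<Longrightarrow> snd (EV i t0 m) < S" unfolding k_def by (rule ev_least(2)[OF oki St])
  have minS: "\<And>s. hs w s \<Longrightarrow> S \<le> s \<Longrightarrow> snd (EV i t0 k) \<le> s"
    using ev_least(3)[OF oki St] aw unfolding a_def k_def by blast
  obtain s0 where s0: "hs w s0" using okw by blast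
  have hk: "hs w (snd (EV i t0 k))" using ev_valid[OF oki, of t0 k] aw unfolding a_def by simp
  have "snd (EV i t0 k) = fst0 w S"
  proof (rule antisym)
    show "snd (EV i t0 k) \<le> fst0 w S" by (rule minS[OF fst0_prop(1)[OF s0] fst0_prop(2)[OF s0]])
    show "fst0 w S \<le> snd (EV i t0 k)" by (rule fst0_prop(3)[OF s0 hk Sk])
  qed
  also have "\<dots> = fst0 w t0 + of_int K" unfolding K by (rule fst0_shift[OF s0])
  finally have base: "EV i t0 k = sh K (EV w t0 0)" using aw ev0 unfolding a_def sh_def by (simp add: prod_eq_iff)
  have corr: "EV i t0 (k + j) = sh K (EV w t0 j)" for j
  proof (induction j)
    case 0 thus ?case using base by simp
  next
    case (Suc j)
    have "EV i t0 (k + Suc j) = step (EV i t0 (k + j))" using evS[of i t0 "k + j"] by simp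
    also have "\<dots> = step (sh K (EV w t0 j))" using Suc.IH by simp
    also have "\<dots> = sh K (step (EV w t0 j))" by (rule step_shift[OF ev_valid[OF okw]])
    also have "\<dots> = sh K (EV w t0 (Suc j))" using evS[of w t0 j] by simp
    finally show ?case .
  qed
  have corr_fst: "fst (EV i t0 (k + j)) = fst (EV w t0 j)" for j using corr[of j] unfolding sh_def by simp
  have corr_snd: "snd (EV i t0 (k + j)) = snd (EV w t0 j) + of_int K" for j using corr[of j] unfolding sh_def by simp
  have tt: "t0 + (x + 2 * pi * of_int K) / (2 * pi) = t0 + x / (2 * pi) + of_int K" for x
    by (simp add: ar)
  have C: "crosses_dir E cen f g w t0 a b x \<longleftrightarrow> crosses_dir E cen f g i t0 a b (x + 2 * pi * of_int K)"
    if x0: "0 \<le> x" for x a b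
  proof
    assume "crosses_dir E cen f g w t0 a b x"
    then obtain m where m: "snd (EV w t0 m) = t0 + x / (2 * pi)" "fst (EV w t0 m) = a" "fst (EV w t0 (Suc m)) = b"
      unfolding crosses_dir_def by blast
    have "snd (EV i t0 (k + m)) = t0 + (x + 2 * pi * of_int K) / (2 * pi)" using m(1) corr_snd tt by simp
    moreover have "fst (EV i t0 (k + m)) = a" using m(2) corr_fst by simp
    moreover have "fst (EV i t0 (Suc (k + m))) = b" using m(3) corr_fst[of "Suc m"] by simp
    moreover have "0 \<le> x + 2 * pi * of_int K" using x0 K0 by simp
    ultimately show "crosses_dir E cen f g i t0 a b (x + 2 * pi * of_int K)" unfolding crosses_dir_def by blast
  next
    assume "crosses_dir E cen f g i t0 a b (x + 2 * pi * of_int K)"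
    then obtain m' where m': "snd (EV i t0 m') = t0 + (x + 2 * pi * of_int K) / (2 * pi)"
      "fst (EV i t0 m') = a" "fst (EV i t0 (Suc m')) = b"
      unfolding crosses_dir_def by blast
    have "S \<le> snd (EV i t0 m')" using m'(1) tt K x0 by simp
    hence "\<not> m' < k" using before by fastforce
    then obtain m where mm: "m' = k + m" by (metis le_iff_add not_less)
    have "snd (EV w t0 m) = t0 + x / (2 * pi)" using m'(1) corr_snd[of m] tt mm by simp
    moreover have "fst (EV w t0 m) = a" using m'(2) corr_fst[of m] mm by simp
    moreover have "fst (EV w t0 (Suc m)) = b" using m'(3) corr_fst[of "Suc m"] mm by simp
    ultimately show "crosses_dir E cen f g w t0 a b x" unfolding crosses_dir_def using x0 by blast
  qed
  have Rc: "reaches E cen f g w t0 P x \<longleftrightarrow> reaches E cen f g i t0 P (x + 2 * pi * of_int K)"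
    if x0: "0 \<le> x" for x P
  proof -
    define T where "T = t0 + x / (2 * pi)"
    have Tge: "t0 \<le> T" unfolding T_def using x0 by simp
    define j0 where "j0 = (LEAST j. T \<le> snd (EV w t0 j))"
    have j0: "T \<le> snd (EV w t0 j0)" unfolding j0_def by (rule ev_least(1)[OF okw Tge])
    have L: "(LEAST m. T + of_int K \<le> snd (EV i t0 m)) = k + j0"
    proof (rule Least_equality)
      show "T + of_int K \<le> snd (EV i t0 (k + j0))" using j0 corr_snd by simp
      fix m assume m: "T + of_int K \<le> snd (EV i t0 m)"
      show "k + j0 \<le> m"
      proof (cases "m < k")
        case True
        hence "snd (EV i t0 m) < S" by (rule before)
        thus ?thesis using m K Tge by simp
      next
        case False
        then obtain j where mm: "m = k + j" by (metis le_iff_add not_less)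
        have "T \<le> snd (EV w t0 j)" using m corr_snd[of j] mm by simp
        hence "j0 \<le> j" unfolding j0_def by (rule Least_le)
        thus ?thesis using mm by simp
      qed
    qed
    have tr: "trc E cen f g i t0 (T + of_int K) = trc E cen f g w t0 T"
      unfolding trc_def L j0_def[symmetric] using corr_fst by simp
    have "t0 + (x + 2 * pi * of_int K) / (2 * pi) = T + of_int K" unfolding T_def using tt by simp
    moreover have "0 \<le> x + 2 * pi * of_int K" using x0 K0 by simp
    ultimately show ?thesis unfolding reaches_def T_def[symmetric] using x0 pos_shift tr by simp
  qed
  show ?thesis
    apply (rule exI[of _ K])
    using K0 lK C Rc
    apply (intro conjI)
    apply simp
    apply simp
    defer
    apply blast
    apply blast
    apply (intro impI)
  proof -
    assume "K = 0"
    hence "S = t0" using K by simp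
    hence "k = 0" unfolding k_def using ev_ge[OF oki, of t0 0] by (simp add: Least_eq_0)
    thus "w = i" using aw ev0 unfolding a_def by simp
  qed
qed

end


context scs_ctx begin

lemma hs_of_edge: assumes "(i,k) \<in> E" shows "\<exists>s. hs i s"
proof -
  have ik: "i < n" "k < n" "i \<noteq> k" using E_edge[OF assms] by auto
  define z where "z = cen k - cen i"
  have z0: "z \<noteq> 0" using sep[OF ik] unfolding z_def by auto
  have gi: "g i \<in> {-1, 1}" using g_pm[OF ik(1)] .
  define s where "s = (Arg z - f i) / (2 * pi * of_int (g i))"
  have "2 * pi * of_int (g i) * s = Arg z - f i" unfolding s_def using gi by auto
  hence "f i + 2 * pi * of_int (g i) * s = Arg z" by simp
  hence "POS i s = cen i + z / of_real (cmod z)" unfolding pos_def using cis_Arg[OF z0] by (simp add: Complex.sgn_eq)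
  hence "HIT i s k" unfolding hit_def lp_def z_def using assms by simp
  thus ?thesis by blast
qed

lemma hs_ok: assumes "i < n" "j < n" "i \<noteq> j" shows "\<exists>s. hs i s"
proof -
  have "(i, j) \<in> (E \<inter> {..<n} \<times> {..<n})\<^sup>*" using scs assms unfolding SCS_def connected_on_def by auto
  then obtain k where "(i, k) \<in> E \<inter> {..<n} \<times> {..<n}" using assms(3) by (metis converse_rtranclE)
  thus ?thesis using hs_of_edge by blast
qed

lemma crosses_corr:
  assumes "\<forall>x a b. 0 \<le> x \<longrightarrow> (crosses_dir E cen f g w t0 a b x \<longleftrightarrow> crosses_dir E cen f g i t0 a b (x + d))"
    "0 \<le> x"
  shows "crosses E cen f g w t0 c x \<longleftrightarrow> crosses E cen f g i t0 c (x + d)"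
  unfolding crosses_def using assms by blast

lemma crosses_nonneg: "crosses E cen f g i t0 c x \<Longrightarrow> 0 \<le> x"
  unfolding crosses_def crosses_dir_def by blast


context
  fixes i w t0 l
  assumes oki: "\<exists>s. hs i s" and okw: "\<exists>s. hs w s" and wn: "w < n"
    and R: "reaches E cen f g i t0 (POS w t0) l"
begin

lemma fwd_all: obtains K where "0 \<le> K" "l = 2 * pi * of_int K" "K = 0 \<longrightarrow> w = i"
    "\<And>x a b. 0 \<le> x \<Longrightarrow> crosses_dir E cen f g w t0 a b x \<longleftrightarrow> crosses_dir E cen f g i t0 a b (x + 2 * pi * of_int K)"
    "\<And>x P. 0 \<le> x \<Longrightarrow> reaches E cen f g w t0 P x \<longleftrightarrow> reaches E cen f g i t0 P (x + 2 * pi * of_int K)"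
proof -
  from fwd[OF oki okw wn R] obtain K where K: "0 \<le> K \<and> l = 2 * pi * of_int K \<and> (K = 0 \<longrightarrow> w = i) \<and>
     (\<forall>x a b. 0 \<le> x \<longrightarrow> (crosses_dir E cen f g w t0 a b x \<longleftrightarrow> crosses_dir E cen f g i t0 a b (x + 2 * pi * of_int K))) \<and>
     (\<forall>x P. 0 \<le> x \<longrightarrow> (reaches E cen f g w t0 P x \<longleftrightarrow> reaches E cen f g i t0 P (x + 2 * pi * of_int K)))" ..
  show ?thesis
    apply (rule that[of K])
    using K apply blast
    using K apply blast
    using K apply blast
    using K apply blast
    using K apply blast
    done
qed

lemma fwd_int: "\<exists>K::int. 0 \<le> K \<and> l = 2 * pi * of_int K"
  by (rule fwd_all) auto

lemma fwd_zero: "l = 0 \<Longrightarrow> w = i"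
  by (rule fwd_all) auto

lemma fwd_cr: "0 \<le> x \<Longrightarrow> crosses E cen f g w t0 c x \<longleftrightarrow> crosses E cen f g i t0 c (x + l)"
proof (rule fwd_all)
  fix K assume "l = 2 * pi * of_int K" "\<And>x a b. 0 \<le> x \<Longrightarrow> crosses_dir E cen f g w t0 a b x \<longleftrightarrow> crosses_dir E cen f g i t0 a b (x + 2 * pi * of_int K)"
    "0 \<le> x"
  thus ?thesis unfolding crosses_def by simp
qed

lemma fwd_re: "0 \<le> x \<Longrightarrow> reaches E cen f g w t0 P x \<longleftrightarrow> reaches E cen f g i t0 P (x + l)"
proof (rule fwd_all)
  fix K assume "l = 2 * pi * of_int K" "\<And>x P. 0 \<le> x \<Longrightarrow> reaches E cen f g w t0 P x \<longleftrightarrow> reaches E cen f g i t0 P (x + 2 * pi * of_int K)"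
    "0 \<le> x"
  thus ?thesis by simp
qed

end


lemma no_rep:
  assumes oki: "\<exists>s. hs i s"
    and noret: "\<And>l'. 0 < l' \<Longrightarrow> l' \<le> d \<Longrightarrow> \<not> reaches E cen f g i t0 (POS i t0) l'"
    and cx: "crosses_dir E cen f g i t0 a b x" and cy: "crosses_dir E cen f g i t0 a b y"
    and xy: "x < y" "y - x \<le> d"
  shows False
proof -
  obtain k where k: "snd (EV i t0 k) = t0 + x / (2 * pi)" "fst (EV i t0 k) = a" "fst (EV i t0 (Suc k)) = b"
    using cx unfolding crosses_dir_def by blast
  obtain k' where k': "snd (EV i t0 k') = t0 + y / (2 * pi)" "fst (EV i t0 k') = a" "fst (EV i t0 (Suc k')) = b"
    using cy unfolding crosses_dir_def by blast
  have h1: "HIT a (snd (EV i t0 k)) b" using ev_hit[OF oki, of t0 k] k by simp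
  have h2: "HIT a (snd (EV i t0 k')) b" using ev_hit[OF oki, of t0 k'] k' by simp
  obtain K where K: "snd (EV i t0 k') = snd (EV i t0 k) + of_int K" using hit_diff[OF h1 h2] by blast
  have "x / (2 * pi) < y / (2 * pi)" using xy(1) by (simp add: divide_strict_right_mono)
  hence lt: "snd (EV i t0 k) < snd (EV i t0 k')" using k(1) k'(1) by simp
  hence kk: "k < k'" using ev_less_iff[OF oki] by blast
  have "EV i t0 k' = sh K (EV i t0 k)" using K k(2) k'(2) unfolding sh_def by (simp add: prod_eq_iff)
  hence e: "EV i t0 (k + (k' - k)) = sh K (EV i t0 k)" using kk by simp
  have p0: "0 < k' - k" using kk by simp
  have r: "reaches E cen f g i t0 (POS i t0) (2 * pi * of_int K)" by (rule ret(2)[OF oki e p0])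
  have K0: "0 < K" by (rule ret(1)[OF oki e p0])
  have "of_int K = y / (2 * pi) - x / (2 * pi)" using K k(1) k'(1) by simp
  hence "2 * pi * of_int K = y - x" by (simp add: field_simps)
  thus False using noret[of "2 * pi * of_int K"] r K0 xy by simp
qed
end


theorem lemma8:
  fixes n m :: nat and cen :: "nat \<Rightarrow> complex" and eps :: real
    and E :: "(nat \<times> nat) set" and f :: "nat \<Rightarrow> real" and g :: "nat \<Rightarrow> int"
    and occ :: "nat set" and t0 :: real and u v :: nat
  assumes "SCS n cen eps E f g"
    and "partial_config n m occ"
    and "u \<in> occ" and "v \<in> occ" and "u \<noteq> v"
    and "same_ring E cen f g u v t0"
  shows "prevents E cen f g u v t0 \<longleftrightarrow>
         (\<exists>l. tie_length E cen f g u t0 l \<and>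
              (ring_simple_path E cen f g u v t0 l \<or> ring_simple_path E cen f g v u t0 l))"
proof -
  interpret scs_ctx n cen eps E f g by unfold_locales (rule assms(1))
  have un: "u < n" and vn: "v < n" using assms(2-4) unfolding partial_config_def by auto
  have oku: "\<exists>s. hs u s" using hs_ok[OF un vn assms(5)] .
  have okv: "\<exists>s. hs v s" using hs_ok[OF vn un] assms(5) by simp
  have reach_pos: "0 < x \<and> (\<exists>k::nat. x = 2 * pi * real k)" if a: "reaches E cen f g u t0 (POS v t0) x" for x
  proof -
    obtain K where K: "0 \<le> K" "x = 2 * pi * of_int K" using fwd_int[OF oku okv vn a] by blast
    have "x \<noteq> 0" using fwd_zero[OF oku okv vn a] assms(5) by blast
    hence "0 < K" using K by (cases "K = 0") auto
    thus ?thesis using K by (intro conjI exI[of _ "nat K"]) auto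
  qed
  obtain l0 where l0: "reaches E cen f g u t0 (POS v t0) l0" using assms(6) unfolding same_ring_def by blast
  define R where "R k \<longleftrightarrow> 0 < k \<and> reaches E cen f g u t0 (POS v t0) (2 * pi * real k)" for k
  obtain k0 where "l0 = 2 * pi * real k0" using reach_pos[OF l0] by blast
  hence "R k0" using reach_pos[OF l0] l0 unfolding R_def by (auto simp: zero_less_mult_iff)
  define K0 where "K0 = (LEAST k. R k)"
  have RK0: "R K0" unfolding K0_def using \<open>R k0\<close> by (rule LeastI)
  define d0 where "d0 = 2 * pi * real K0"
  have d0pos: "0 < d0" using RK0 unfolding R_def d0_def by simp
  have rd0: "reaches E cen f g u t0 (POS v t0) d0" using RK0 unfolding R_def d0_def by simp
  have noret: "\<not> reaches E cen f g u t0 (POS u t0) l'" if l': "0 < l'" "l' \<le> d0" for l'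
  proof
    assume ru: "reaches E cen f g u t0 (POS u t0) l'"
    obtain K' where K': "0 \<le> K'" "l' = 2 * pi * of_int K'" using fwd_int[OF oku oku un ru] by blast
    have "reaches E cen f g u t0 (POS v t0) ((d0 - l') + l')" using rd0 by simp
    hence r2: "reaches E cen f g u t0 (POS v t0) (d0 - l')" using fwd_re[OF oku oku un ru, of "d0 - l'"] l' by simp
    have "0 < d0 - l'" using reach_pos[OF r2] by simp
    have KK: "0 < K'" "K' < int K0" using l' K'(2) \<open>0 < d0 - l'\<close> unfolding d0_def by (auto simp: mult_less_cancel_left_pos zero_less_mult_iff)
    have "d0 - l' = 2 * pi * real (nat (int K0 - K'))" using K'(2) KK unfolding d0_def by (simp add: algebra_simps)
    hence "R (nat (int K0 - K'))" using r2 KK unfolding R_def by simp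
    moreover have "nat (int K0 - K') < K0" using KK by simp
    ultimately show False unfolding K0_def using not_less_Least by blast
  qed
  have simple_uv: "ring_simple_path E cen f g u v t0 d0"
    unfolding ring_simple_path_def using rd0 noret by blast
  show ?thesis
  proof
    assume "prevents E cen f g u v t0"
    then obtain c l where cv: "crosses E cen f g v t0 c l" and cu: "crosses E cen f g u t0 c l"
      unfolding prevents_def by blast
    have l0: "0 \<le> l" by (rule crosses_nonneg[OF cu])
    have cu2: "crosses E cen f g u t0 c (l + d0)" using fwd_cr[OF oku okv vn rd0 l0] cv by simp
    obtain a b where ab: "crosses_dir E cen f g u t0 a b l" "cp cen a b = c" using cu unfolding crosses_def by blast
    obtain a' b' where ab': "crosses_dir E cen f g u t0 a' b' (l + d0)" "cp cen a' b' = c" using cu2 unfolding crosses_def by blast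
    have edge: "(a, b) \<in> E" if cdab: "crosses_dir E cen f g u t0 a b x" for a b x
    proof -
      obtain k where "fst (EV u t0 k) = a" "fst (EV u t0 (Suc k)) = b" using cdab unfolding crosses_dir_def by blast
      thus ?thesis using hit_E[OF ev_hit[OF oku, of t0 k]] by simp
    qed
    have dir: "(a'', b'') = (a, b) \<or> (a'', b'') = (b, a)" if "crosses_dir E cen f g u t0 a'' b'' x" "cp cen a'' b'' = c" for a'' b'' x
      using cp_unique[OF edge[OF ab(1)] edge[OF that(1)]] ab(2) that(2) by simp
    have "(a', b') \<noteq> (a, b)"
    proof
      assume "(a', b') = (a, b)"
      hence "crosses_dir E cen f g u t0 a b (l + d0)" using ab'(1) by simp
      thus False using no_rep[where d=d0, OF oku noret ab(1), of "l + d0"] d0pos by simp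
    qed
    hence ba: "crosses_dir E cen f g u t0 b a (l + d0)" using dir[OF ab'] ab'(1) by auto
    have tie: "tie_length E cen f g u t0 d0"
      unfolding tie_length_def
    proof (intro exI conjI)
      show "self_crosses E cen f g u t0 c" unfolding self_crosses_def using ab ba by blast
      show "crosses E cen f g u t0 c l" by (rule cu)
      show "crosses E cen f g u t0 c (l + d0)" by (rule cu2)
      show "l < l + d0" using d0pos by simp
      show "d0 = l + d0 - l" by simp
      show "\<forall>x. l < x \<and> x < l + d0 \<longrightarrow> \<not> crosses E cen f g u t0 c x"
      proof (intro allI impI notI)
        fix x assume x: "l < x \<and> x < l + d0" and cx: "crosses E cen f g u t0 c x"
        obtain a'' b'' where ab'': "crosses_dir E cen f g u t0 a'' b'' x" "cp cen a'' b'' = c"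
          using cx unfolding crosses_def by blast
        from dir[OF ab''] show False
        proof
          assume "(a'', b'') = (a, b)"
          hence "crosses_dir E cen f g u t0 a b x" using ab''(1) by simp
          thus False using no_rep[where d=d0, OF oku noret ab(1), of x] x by simp
        next
          assume "(a'', b'') = (b, a)"
          hence "crosses_dir E cen f g u t0 b a x" using ab''(1) by simp
          thus False using no_rep[where d=d0, OF oku noret _ ba, of x] x by simp
        qed
      qed
    qed
    show "\<exists>l. tie_length E cen f g u t0 l \<and> (ring_simple_path E cen f g u v t0 l \<or> ring_simple_path E cen f g v u t0 l)"
      using tie simple_uv by blast
  next
    assume "\<exists>l. tie_length E cen f g u t0 l \<and> (ring_simple_path E cen f g u v t0 l \<or> ring_simple_path E cen f g v u t0 l)"
    then obtain T where tieT: "tie_length E cen f g u t0 T"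
      and sp: "ring_simple_path E cen f g u v t0 T \<or> ring_simple_path E cen f g v u t0 T" by blast
    obtain c l1 l2 where c1: "crosses E cen f g u t0 c l1" and c2: "crosses E cen f g u t0 c l2" and T: "T = l2 - l1"
      using tieT unfolding tie_length_def by blast
    have l1: "0 \<le> l1" by (rule crosses_nonneg[OF c1])
    from sp show "prevents E cen f g u v t0"
    proof
      assume "ring_simple_path E cen f g u v t0 T"
      hence rT: "reaches E cen f g u t0 (POS v t0) T" unfolding ring_simple_path_def by blast
      have "crosses E cen f g v t0 c l1" using fwd_cr[OF oku okv vn rT l1] c2 T by simp
      thus ?thesis unfolding prevents_def using c1 by blast
    next
      assume "ring_simple_path E cen f g v u t0 T"
      hence rT: "reaches E cen f g v t0 (POS u t0) T" unfolding ring_simple_path_def by blast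
      have "crosses E cen f g v t0 c l2" using fwd_cr[OF okv oku un rT l1] c1 T by simp
      thus ?thesis unfolding prevents_def using c2 by blast
    qed
  qed
qed


end
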